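(* Fix an integer $k\geq 1$. For $m\geq 1$, let $X_0(k,m)$ be the set of permutations $p=p_1p_2\cdots p_m\in S_m$ that avoid the pattern $231$ and satisfy $p_1=m$ and $p_k=1$. Then, as formal power series, \[\sum_{m\geq 1}\vert X_0(k,m)\vert x^m=x^kC(x)^{k-1},\] where $C(x)=\dfrac{1-\sqrt{1-4x}}{2x}=\sum_{m\geq 0}C_mx^m$ is the generating function of the Catalan numbers $C_m=\frac{1}{m+1}\binom{2m}{m}$.
   Context: A permutation $\pi=\pi_1\cdots\pi_n$ contains a pattern $\tau=\tau_1\cdots\tau_k\in S_k$ if there are indices $i_1<\cdots<i_k$ with $\pi_{i_j}<\pi_{i_\ell}$ iff $\tau_j<\tau_\ell$ for all $j,\ell$; otherwise $\pi$ avoids $\tau$. *)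

theory Defs
  imports "HOL-Computational_Algebra.Formal_Power_Series"
begin

text \<open>Permutations of [m] in one-line notation: lists p with p!(i-1) = p_i.\<close>
definition perms :: "nat \<Rightarrow> nat list set" where
  "perms m = {p. distinct p \<and> set p = {1..m}}"

definition contains :: "nat list \<Rightarrow> nat list \<Rightarrow> bool" where
  "contains p tau \<longleftrightarrow> (\<exists>is. length is = length tau \<and> sorted_wrt (<) is \<and>
      (\<forall>j<length is. is ! j < length p) \<and>
      (\<forall>j<length tau. \<forall>l<length tau. (p ! (is ! j) < p ! (is ! l) \<longleftrightarrow> tau ! j < tau ! l)))"

definition avoids :: "nat list \<Rightarrow> nat list \<Rightarrow> bool" where
  "avoids p tau \<longleftrightarrow> \<not> contains p tau"

definition X0 :: "nat \<Rightarrow> nat \<Rightarrow> nat list set" where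
  "X0 k m = {p \<in> perms m. avoids p [2,3,1] \<and> k \<le> m \<and> p ! 0 = m \<and> p ! (k - 1) = 1}"

definition catalan :: "nat \<Rightarrow> nat" where
  "catalan n = (2 * n choose n) div (n + 1)"

definition catalan_fps :: "int fps" where
  "catalan_fps = Abs_fps (\<lambda>n. int (catalan n))"

end

theory Submission
  imports Defs
begin

unbundle fps_syntax



fun T :: "nat \<Rightarrow> int" where
  "T 0 = 1"
| "T (Suc n) = (\<Sum>j=0..n. T j * T (n - j))"

declare T.simps(2)[simp del]

definition G :: "int fps" where "G = Abs_fps T"

lemma G_eq: "G = 1 + fps_X * G^2"
proof (rule fps_ext)
  fix n show "G $ n = (1 + fps_X * G^2) $ n"
  proof (cases n)
    case (Suc m)
    have "(1 + fps_X * G^2) $ n = (G*G) $ m" using Suc by (simp add: power2_eq_square)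
    also have "\<dots> = T n" using Suc by (simp add: fps_mult_nth G_def T.simps(2))
    finally show ?thesis by (simp add: G_def)
  qed (simp add: G_def)
qed

lemma T_rec: "int (n+2) * T (n+1) = int (4*n+2) * T n"
proof -
  define H :: "int fps" where "H = 1 - 2 * fps_X * G"
  have H2: "H^2 = 1 - 4 * fps_X"
  proof -
    have "H^2 = 1 - 4*fps_X*(G - fps_X*G^2)" unfolding H_def by (simp add: power2_eq_square algebra_simps)
    also have "G - fps_X*G^2 = 1" using G_eq by (simp add: algebra_simps)
    finally show ?thesis by simp
  qed
  have "fps_deriv (H^2) = - 4" using H2 by simp
  hence HD: "2 * H * fps_deriv H = -4" by (simp add: power2_eq_square algebra_simps)
  have "2 * ((1 - 4*fps_X) * fps_deriv H) = 2 * (-2 * H)"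
  proof -
    have "2 * ((1 - 4*fps_X) * fps_deriv H) = 2*((H*H)*fps_deriv H)" using H2 by (simp add: power2_eq_square)
    also have "\<dots> = H * (2 * H * fps_deriv H)" by (simp add: algebra_simps)
    also have "\<dots> = 2 * (-2 * H)" using HD by simp
    finally show ?thesis .
  qed
  hence E: "(1 - 4*fps_X) * fps_deriv H = -2 * H"
    by (metis mult_cancel_left zero_neq_numeral)
  have hn: "H $ Suc j = -2 * T j" for j unfolding H_def G_def by (simp add: mult.assoc numeral_fps_const)
  have eq1: "(1 - 4*fps_X) * fps_deriv H = fps_deriv H - fps_const 4 * (fps_X * fps_deriv H)"
    by (simp add: algebra_simps numeral_fps_const)
  have eq2: "-2*H = fps_const (-2) * H" by (simp add: numeral_fps_const)
  have "(fps_deriv H - fps_const 4 * (fps_X * fps_deriv H)) $ (n+1) = (fps_const (-2) * H) $ (n+1)"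
    using E eq1 eq2 by simp
  hence h: "of_nat (n+2) * H $ (n+2) - 4 * (of_nat (n+1) * H $ (n+1)) = -2 * H $ (n+1)"
    by simp
  have h1: "H $ (n+2) = -2 * T (n+1)" using hn[of "n+1"] by simp
  have h2: "H $ (n+1) = -2 * T n" using hn[of n] by simp
  obtain a b where a: "a = T (n+1)" and b: "b = T n" by blast
  have "of_nat (n+2) * (-2 * a) - 4 * (of_nat (n+1) * (-2 * b)) = -2 * (-2 * (b::int))"
    using h unfolding h1 h2 a b .
  hence "int (n+2) * a = int (4*n+2) * b" by (simp add: algebra_simps)
  thus ?thesis using a b by simp
qed

lemma B_rec: "(4*n+2) * (2*n choose n) = (n+1) * (2*(n+1) choose (n+1))"
proof -
  obtain P R Q where P: "P = (2*(n+1) choose (n+1))" and R: "R = (2*n+1 choose n)"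
    and Q: "Q = (2*n choose n)" by blast
  have e1: "(Suc (2*n+1) choose Suc n) = P" unfolding P
    by (rule arg_cong2[where f="(choose)"]) simp_all
  have a: "(n+1)*P = (2*n+2)*R"
  proof -
    have "Suc n * (Suc (2*n+1) choose Suc n) = Suc (2*n+1) * (2*n+1 choose n)" by (rule Suc_times_binomial)
    thus ?thesis unfolding e1 R[symmetric] by simp
  qed
  have b: "(n+1)*R = (2*n+1)*Q"
  proof -
    have "(2*n+1 - n) * (2*n+1 choose n) = (2*n+1) * ((2*n+1 - 1) choose n)" by (rule binomial_absorb_comp)
    moreover have "2*n+1 - n = n+1" "2*n+1-1 = 2*n" by simp_all
    ultimately show ?thesis unfolding R Q by simp
  qed
  have "(n+1) * ((n+1)*P) = (n+1) * ((4*n+2)*Q)"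
  proof -
    have "(n+1) * ((n+1)*P) = (2*n+2)*((n+1)*R)" using a by (simp add: algebra_simps)
    also have "\<dots> = (n+1)*((4*n+2)*Q)" using b by (simp add: algebra_simps)
    finally show ?thesis .
  qed
  moreover have c: "(n+1::nat) \<noteq> 0" by simp
  ultimately have "(n+1)*P = (4*n+2)*Q" using mult_left_cancel[OF c] by blast
  thus ?thesis using P Q by simp
qed

lemma T_binom: "int (n+1) * T n = int (2*n choose n)"
proof (induction n)
  case 0 then show ?case by simp
next
  case (Suc n)
  obtain P Q where P: "P = (2*(n+1) choose (n+1))" and Q: "Q = (2*n choose n)" by blast
  have br: "(4*n+2) * Q = (n+1) * P" using B_rec[of n] unfolding P Q .
  have ih: "int (n+1) * T n = int Q" using Suc unfolding Q .
  have "int (n+1) * (int (n+2) * T (n+1)) = int (n+1) * (int (4*n+2) * T n)" using T_rec[of n] by simp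
  also have "\<dots> = int (4*n+2) * (int (n+1) * T n)" by (simp only: mult.left_commute)
  also have "\<dots> = int ((4*n+2) * Q)" unfolding ih by (simp only: of_nat_mult)
  also have "\<dots> = int (n+1) * int P" unfolding br by (simp only: of_nat_mult)
  finally have "int (n+2) * T (n+1) = int P" by simp
  hence "int (Suc n + 1) * T (Suc n) = int (2 * Suc n choose Suc n)" using P by simp
  thus ?case .
qed

lemma T_catalan: "T n = int (catalan n)"
proof -
  obtain Q where Q: "Q = (2*n choose n)" by blast
  have tb: "int (n+1) * T n = int Q" using T_binom[of n] unfolding Q .
  have h: "0 \<le> int (n+1) * T n" unfolding tb by simp
  have "T n \<ge> 0" using h by (simp add: zero_le_mult_iff)
  then obtain t where t: "T n = int t" using nonneg_int_cases by blast
  have "int ((n+1) * t) = int Q" using tb unfolding t by (simp only: of_nat_mult)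
  hence nt: "(n+1) * t = Q" by (simp only: of_nat_eq_iff)
  have "catalan n = Q div (n+1)" unfolding catalan_def Q ..
  also have "\<dots> = t" unfolding nt[symmetric] by (rule nonzero_mult_div_cancel_left) simp
  finally show ?thesis using t by simp
qed

lemma catalan_rec: "catalan (Suc n) = (\<Sum>j=0..n. catalan j * catalan (n - j))"
proof -
  have "int (catalan (Suc n)) = T (Suc n)" using T_catalan by simp
  also have "\<dots> = (\<Sum>j=0..n. T j * T (n - j))" by (rule T.simps(2))
  also have "\<dots> = (\<Sum>j=0..n. int (catalan j * catalan (n - j)))" by (simp add: T_catalan)
  also have "\<dots> = int (\<Sum>j=0..n. catalan j * catalan (n - j))" by (simp only: of_nat_sum)
  finally show ?thesis by (simp only: of_nat_eq_iff)
qed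

lemma catalan0: "catalan 0 = 1" by (simp add: catalan_def)


definition pat :: "nat list \<Rightarrow> bool" where
  "pat p \<longleftrightarrow> (\<exists>i j l. i<j \<and> j<l \<and> l<length p \<and> p!l < p!i \<and> p!i < p!j)"

lemma len3: "length xs = 3 \<Longrightarrow> \<exists>a b c. xs = [a,b,c]"
  by (cases xs; cases "tl xs"; cases "tl (tl xs)"; auto simp: numeral_3_eq_3)

lemma avoids_pat: "avoids p [2,3,1] \<longleftrightarrow> \<not> pat p"
proof
  assume "\<not> pat p"
  show "avoids p [2,3,1]" unfolding avoids_def contains_def
  proof
    assume "\<exists>is. length is = length [2::nat,3,1] \<and> sorted_wrt (<) is \<and>
      (\<forall>j<length is. is ! j < length p) \<and>
      (\<forall>j<length [2::nat,3,1]. \<forall>l<length [2::nat,3,1]. (p ! (is ! j) < p ! (is ! l) \<longleftrightarrow> [2::nat,3,1] ! j < [2::nat,3,1] ! l))"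
    then obtain "is" where H: "length is = length [2::nat,3,1] \<and> sorted_wrt (<) is \<and>
      (\<forall>j<length is. is ! j < length p) \<and>
      (\<forall>j<length [2::nat,3,1]. \<forall>l<length [2::nat,3,1]. (p ! (is ! j) < p ! (is ! l) \<longleftrightarrow> [2::nat,3,1] ! j < [2::nat,3,1] ! l))"
      by blast
    have L: "length is = 3" and S: "sorted_wrt (<) is" and B: "\<forall>j<length is. is ! j < length p"
      using H by auto
    have C: "\<forall>j<3. \<forall>l<3. (p ! (is ! j) < p ! (is ! l) \<longleftrightarrow> [2::nat,3,1] ! j < [2::nat,3,1] ! l)"
      using H by simp
    obtain a b c where abc: "is = [a,b,c]" using len3[OF L] by blast
    have "a<b" "b<c" using S abc by auto
    moreover have "c < length p" using B abc by auto
    moreover have "p!a < p!b" using C[rule_format, of 0 1] abc by simp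
    moreover have "p!c < p!a" using C[rule_format, of 2 0] abc by simp
    ultimately have "pat p" unfolding pat_def by blast
    thus False using \<open>\<not> pat p\<close> by simp
  qed
next
  assume "avoids p [2,3,1]"
  show "\<not> pat p"
  proof
    assume "pat p"
    then obtain i j l where h: "i<j" "j<l" "l<length p" "p!l < p!i" "p!i < p!j"
      unfolding pat_def by blast
    have "contains p [2,3,1]" unfolding contains_def
      apply (rule exI[of _ "[i,j,l]"])
      using h by (auto simp: less_Suc_eq numeral_3_eq_3)
    thus False using \<open>avoids p [2,3,1]\<close> unfolding avoids_def by simp
  qed
qed

lemma pat_append1: "pat xs \<Longrightarrow> pat (xs @ ys)"
proof -
  assume "pat xs"
  then obtain i j l where h: "i<j" "j<l" "l<length xs" "xs!l < xs!i" "xs!i < xs!j"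
    unfolding pat_def by blast
  show ?thesis unfolding pat_def
    apply (rule exI[of _ i], rule exI[of _ j], rule exI[of _ l])
    using h by (simp add: nth_append)
qed

lemma pat_append2: "pat ys \<Longrightarrow> pat (xs @ ys)"
proof -
  assume "pat ys"
  then obtain i j l where h: "i<j" "j<l" "l<length ys" "ys!l < ys!i" "ys!i < ys!j"
    unfolding pat_def by blast
  show ?thesis unfolding pat_def
    apply (rule exI[of _ "length xs + i"], rule exI[of _ "length xs + j"], rule exI[of _ "length xs + l"])
    using h by (simp add: nth_append)
qed

lemma pat_Cons: "pat xs \<Longrightarrow> pat (a # xs)"
  using pat_append2[of xs "[a]"] by simp

lemma pat_split:
  assumes "\<forall>u\<in>set x. \<forall>v\<in>set y. u<v" "pat (x@y)"
  shows "pat x \<or> pat y"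
proof -
  obtain i j l where h: "i<j" "j<l" "l<length (x@y)" "(x@y)!l < (x@y)!i" "(x@y)!i < (x@y)!j"
    using assms(2) unfolding pat_def by blast
  consider "l < length x" | "length x \<le> i" | "i < length x" "length x \<le> l" by linarith
  thus ?thesis
  proof cases
    case 1
    hence "pat x" unfolding pat_def using h
      by (intro exI[of _ i] exI[of _ j] exI[of _ l]) (simp add: nth_append)
    thus ?thesis ..
  next
    case 2
    have e: "(x@y)!i = y!(i - length x)" "(x@y)!j = y!(j-length x)" "(x@y)!l = y!(l - length x)"
      using 2 h by (auto simp: nth_append)
    have "pat y" unfolding pat_def using h e 2
      by (intro exI[of _ "i - length x"] exI[of _ "j - length x"] exI[of _ "l - length x"]) auto
    thus ?thesis ..
  next
    case 3
    have "(x@y)!i \<in> set x" using 3 by (simp add: nth_append)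
    moreover have "(x@y)!l \<in> set y" using 3 h(3) by (simp add: nth_append)
    ultimately show ?thesis using assms(1) h(4) by fastforce
  qed
qed

lemma pat_head:
  assumes "\<forall>v\<in>set y. v < M" "pat (M # y)"
  shows "pat y"
proof -
  obtain i j l where h: "i<j" "j<l" "l<length (M#y)" "(M#y)!l < (M#y)!i" "(M#y)!i < (M#y)!j"
    using assms(2) unfolding pat_def by blast
  show ?thesis
  proof (cases i)
    case 0
    obtain j' where "j = Suc j'" using h(1) 0 by (cases j) auto
    hence "(M#y)!j \<in> set y" using h by simp
    thus ?thesis using assms(1) h(5) 0 by fastforce
  next
    case (Suc i')
    then obtain j' l' where "j = Suc j'" "l = Suc l'" using h by (cases j; cases l) auto
    thus ?thesis unfolding pat_def using h Suc
      by (intro exI[of _ i'] exI[of _ j'] exI[of _ l']) simp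
  qed
qed

definition Av :: "nat \<Rightarrow> nat \<Rightarrow> nat list set" where
  "Av a n = {p. distinct p \<and> set p = {a..<a+n} \<and> \<not> pat p}"

lemma finite_Av: "finite (Av a n)"
proof -
  have "Av a n \<subseteq> {xs. set xs \<subseteq> {a..<a+n} \<and> length xs \<le> n}"
    unfolding Av_def by (auto dest: distinct_card)
  thus ?thesis using finite_lists_length_le[of "{a..<a+n}" n] finite_subset by blast
qed

lemma init_seg:
  assumes "finite S" "\<forall>u\<in>S. a \<le> u" "\<forall>u\<in>S. \<forall>w. a \<le> w \<longrightarrow> w < u \<longrightarrow> w \<in> S"
  shows "S = {a..<a + card S}"
proof (cases "S = {}")
  case True thus ?thesis by simp
next
  case False
  define mx where "mx = Max S"
  have mx: "mx \<in> S" "\<forall>u\<in>S. u \<le> mx" using False assms(1) unfolding mx_def by auto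
  have "S = {a..mx}"
  proof
    show "S \<subseteq> {a..mx}" using mx assms(2) by auto
    show "{a..mx} \<subseteq> S"
    proof
      fix w assume "w \<in> {a..mx}"
      thus "w \<in> S" using mx assms(3) by (cases "w = mx") auto
    qed
  qed
  moreover have "a \<le> mx" using mx assms(2) by auto
  ultimately show ?thesis by auto
qed

lemma Av_rec: "Av a (Suc n) = (\<Union>j\<in>{..n}. (\<lambda>(x,y). x @ (a+n) # y) ` (Av a j \<times> Av (a+j) (n-j)))"
proof
  show "(\<Union>j\<in>{..n}. (\<lambda>(x,y). x @ (a+n) # y) ` (Av a j \<times> Av (a+j) (n-j))) \<subseteq> Av a (Suc n)"
  proof (rule UN_least, rule image_subsetI)
    fix j xy assume j: "j \<in> {..n}" and xy: "xy \<in> Av a j \<times> Av (a+j) (n-j)"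
    obtain x y where xyd: "xy = (x,y)" and x: "x \<in> Av a j" and y: "y \<in> Av (a+j) (n-j)" using xy by blast
    have jn: "j \<le> n" using j by simp
    hence ajn: "a + j + (n - j) = a + n" by simp
    have sx: "set x = {a..<a+j}" using x unfolding Av_def by auto
    have "set y = {a+j..<a+j+(n-j)}" using y unfolding Av_def by blast
    hence sy: "set y = {a+j..<a+n}" by (simp only: ajn)
    have d: "distinct (x @ (a+n) # y)" using x y sx sy jn unfolding Av_def by auto
    have s: "set (x @ (a+n) # y) = {a..<a+Suc n}" using sx sy j by auto
    have np: "\<not> pat (x @ (a+n) # y)"
    proof
      assume "pat (x @ (a+n) # y)"
      moreover have "\<forall>u\<in>set x. \<forall>v\<in>set ((a+n) # y). u<v" using sx sy j by auto
      ultimately have "pat x \<or> pat ((a+n) # y)" using pat_split by blast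
      moreover have "\<forall>v\<in>set y. v < a+n" using sy by auto
      ultimately have "pat x \<or> pat y" using pat_head by blast
      thus False using x y unfolding Av_def by auto
    qed
    show "(\<lambda>(x,y). x @ (a+n) # y) xy \<in> Av a (Suc n)" using d s np xyd unfolding Av_def by simp
  qed
next
  show "Av a (Suc n) \<subseteq> (\<Union>j\<in>{..n}. (\<lambda>(x,y). x @ (a+n) # y) ` (Av a j \<times> Av (a+j) (n-j)))"
  proof
    fix p assume p: "p \<in> Av a (Suc n)"
    hence dp: "distinct p" and sp: "set p = {a..<a+Suc n}" and np: "\<not> pat p" unfolding Av_def by auto
    have "a+n \<in> set p" using sp by simp
    then obtain x y where pxy: "p = x @ (a+n) # y" by (meson split_list)
    have Mx: "a+n \<notin> set x" and My: "a+n \<notin> set y" and dxy: "set x \<inter> set y = {}"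
      using dp pxy by auto
    have xy: "\<forall>u\<in>set x. \<forall>v\<in>set y. u<v"
    proof (rule ccontr)
      assume "\<not> ?thesis"
      then obtain u v where u: "u \<in> set x" and v: "v \<in> set y" and vu: "\<not> u < v" by blast
      have "u \<noteq> v" using u v dxy by auto
      hence vu': "v < u" using vu by simp
      obtain i where i: "i < length x" "x!i = u" using u by (meson in_set_conv_nth)
      obtain l where l: "l < length y" "y!l = v" using v by (meson in_set_conv_nth)
      have "u \<in> {a..<a+Suc n}" using u sp pxy by auto
      moreover have "u \<noteq> a+n" using u Mx by auto
      ultimately have "u < a+n" by auto
      have "pat p" unfolding pat_def
        apply (rule exI[of _ i], rule exI[of _ "length x"], rule exI[of _ "length x + 1 + l"])
        using i l vu' \<open>u < a+n\<close> pxy by (simp add: nth_append)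
      thus False using np by simp
    qed
    have u1: "set x \<union> set y = set p - {a+n}" using pxy Mx My by auto
    have u2: "set p - {a+n} = {a..<a+n}" unfolding sp by (simp add: atLeastLessThanSuc)
    have uxy: "set x \<union> set y = {a..<a+n}" using u1 u2 by simp
    define j where "j = length x"
    have sx: "set x = {a..<a+j}"
    proof -
      have "set x = {a..<a + card (set x)}"
      proof (rule init_seg)
        show "\<forall>u\<in>set x. a \<le> u" using uxy by auto
        show "\<forall>u\<in>set x. \<forall>w. a \<le> w \<longrightarrow> w < u \<longrightarrow> w \<in> set x"
        proof (intro ballI allI impI)
          fix u w assume u: "u \<in> set x" and w: "a \<le> w" "w < u"
          have "u \<in> {a..<a+n}" using uxy u by blast
          hence "w \<in> {a..<a+n}" using w by auto
          hence "w \<in> set x \<union> set y" using uxy by blast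
          thus "w \<in> set x"
          proof
            assume "w \<in> set y"
            hence "u < w" using xy u by blast
            thus ?thesis using w by simp
          qed
        qed
      qed simp
      thus ?thesis using dp pxy distinct_card[of x] unfolding j_def by simp
    qed
    have jn: "j \<le> n"
    proof -
      have "set x \<subseteq> {a..<a+n}" using uxy by auto
      hence "card (set x) \<le> card {a..<a+n}" by (rule card_mono[rotated]) simp
      moreover have "card (set x) = j" unfolding j_def using dp pxy by (simp add: distinct_card)
      ultimately show ?thesis by simp
    qed
    have "set y = {a..<a+n} - {a..<a+j}" using uxy dxy sx by blast
    also have "\<dots> = {a+j..<a+n}" using jn by auto
    also have "a+n = a+j+(n-j)" using jn by simp
    finally have sy: "set y = {a+j..<a+j+(n-j)}" .
    have x: "x \<in> Av a j" using dp pxy sx np pat_append1[of x "(a+n)#y"] unfolding Av_def by auto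
    have y: "y \<in> Av (a+j) (n-j)" using dp pxy sy np pat_append2[of y "x @ [a+n]"] unfolding Av_def by auto
    show "p \<in> (\<Union>j\<in>{..n}. (\<lambda>(x,y). x @ (a+n) # y) ` (Av a j \<times> Av (a+j) (n-j)))"
    proof (rule UN_I[of j])
      show "j \<in> {..n}" using jn by simp
      have "p = (\<lambda>(x,y). x @ (a+n) # y) (x,y)" using pxy by simp
      moreover have "(x,y) \<in> Av a j \<times> Av (a+j) (n-j)" using x y by simp
      ultimately show "p \<in> (\<lambda>(x,y). x @ (a+n) # y) ` (Av a j \<times> Av (a+j) (n-j))" by (rule image_eqI)
    qed
  qed
qed

lemma Av_len: "x \<in> Av b j \<Longrightarrow> length x = j"
proof -
  assume "x \<in> Av b j"
  hence "distinct x" "set x = {b..<b+j}" unfolding Av_def by auto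
  hence "length x = card {b..<b+j}" using distinct_card by metis
  thus ?thesis by simp
qed

lemma Av_disj_aux:
  assumes "x \<in> Av a i" "x' \<in> Av a j" "x @ (a+n) # y = x' @ (a+n) # y'" "i < j" "j \<le> n"
  shows False
proof -
  have li: "length x = i" and lj: "length x' = j" using assms Av_len by auto
  have "(x @ (a+n) # y) ! i = a+n" using li by (simp add: nth_append)
  moreover have "(x' @ (a+n) # y') ! i = x' ! i" using lj assms(4) by (simp add: nth_append)
  moreover have "x' ! i \<in> set x'" using lj assms(4) by simp
  moreover have "set x' = {a..<a+j}" using assms(2) unfolding Av_def by simp
  ultimately have "a+n \<in> {a..<a+j}" using assms(3) by metis
  thus False using assms(5) by simp
qed

lemma card_Av_rec: "card (Av a (Suc n)) = (\<Sum>j\<le>n. card (Av a j) * card (Av (a+j) (n-j)))"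
proof -
  define f :: "nat list \<times> nat list \<Rightarrow> nat list" where "f = (\<lambda>(x,y). x @ (a+n) # y)"
  have inj: "inj_on f (Av a j \<times> Av (a+j) (n-j))" for j
  proof (rule inj_onI)
    fix u v assume u: "u \<in> Av a j \<times> Av (a+j) (n-j)" and v: "v \<in> Av a j \<times> Av (a+j) (n-j)" and e: "f u = f v"
    obtain x y where uxy: "u = (x,y)" and x: "x \<in> Av a j" using u by blast
    obtain x' y' where vxy: "v = (x',y')" and x': "x' \<in> Av a j" using v by blast
    have "x @ (a+n) # y = x' @ (a+n) # y'" using e uxy vxy unfolding f_def by simp
    moreover have "length x = length x'" using x x' Av_len by simp
    ultimately show "u = v" using uxy vxy by simp
  qed
  have "card (Av a (Suc n)) = (\<Sum>j\<le>n. card (f ` (Av a j \<times> Av (a+j) (n-j))))"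
    unfolding Av_rec f_def[symmetric]
  proof (rule card_UN_disjoint)
    show "finite {..n}" by simp
    show "\<forall>j\<in>{..n}. finite (f ` (Av a j \<times> Av (a+j) (n-j)))"
      using finite_Av by auto
    show "\<forall>i\<in>{..n}. \<forall>j\<in>{..n}. i \<noteq> j \<longrightarrow> f ` (Av a i \<times> Av (a+i) (n-i)) \<inter>
        f ` (Av a j \<times> Av (a+j) (n-j)) = {}"
    proof (intro ballI impI)
      fix i j assume i: "i \<in> {..n}" and j: "j \<in> {..n}" and ij: "i \<noteq> j"
      show "f ` (Av a i \<times> Av (a+i) (n-i)) \<inter> f ` (Av a j \<times> Av (a+j) (n-j)) = {}"
      proof (rule ccontr)
        assume "\<not> ?thesis"
        then obtain z where z1: "z \<in> f ` (Av a i \<times> Av (a+i) (n-i))" and z2: "z \<in> f ` (Av a j \<times> Av (a+j) (n-j))"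
          by blast
        obtain u where u: "u \<in> Av a i \<times> Av (a+i) (n-i)" "z = f u" using z1 by blast
        obtain v where v: "v \<in> Av a j \<times> Av (a+j) (n-j)" "z = f v" using z2 by blast
        obtain x y where uxy: "u = (x,y)" and x: "x \<in> Av a i" using u(1) by blast
        obtain x' y' where vxy: "v = (x',y')" and x': "x' \<in> Av a j" using v(1) by blast
        have e: "x @ (a+n) # y = x' @ (a+n) # y'" using u(2) v(2) uxy vxy unfolding f_def by simp
        show False
        proof (cases "i < j")
          case True thus False using Av_disj_aux[OF x x' e] j by simp
        next
          case False
          hence "j < i" using ij by simp
          thus False using Av_disj_aux[OF x' x e[symmetric]] i by simp
        qed
      qed
    qed
  qed
  also have "\<dots> = (\<Sum>j\<le>n. card (Av a j) * card (Av (a+j) (n-j)))"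
    by (rule sum.cong) (simp_all add: card_image[OF inj] card_cartesian_product)
  finally show ?thesis .
qed



lemma card_Av: "card (Av a n) = catalan n"
proof (induction n arbitrary: a rule: less_induct)
  case (less n)
  show ?case
  proof (cases n)
    case 0
    have "Av a 0 = {[]}" unfolding Av_def pat_def by auto
    thus ?thesis using 0 catalan0 by simp
  next
    case (Suc m)
    have "card (Av a n) = (\<Sum>j\<le>m. card (Av a j) * card (Av (a+j) (m-j)))"
      using Suc card_Av_rec by simp
    also have "\<dots> = (\<Sum>j\<le>m. catalan j * catalan (m-j))"
      by (rule sum.cong) (use less Suc in auto)
    also have "\<dots> = catalan n" using Suc catalan_rec by (simp add: atMost_atLeast0)
    finally show ?thesis .
  qed
qed

lemma X0_mem: "p \<in> X0 k m \<longleftrightarrow> distinct p \<and> set p = {1..m} \<and> \<not> pat p \<and> k \<le> m \<and> p!0 = m \<and> p!(k-1) = 1"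
  unfolding X0_def perms_def avoids_pat by auto

lemma X0_sub: "X0 k m \<subseteq> Av 1 m"
proof
  fix p assume "p \<in> X0 k m"
  hence "distinct p" "set p = {1..m}" "\<not> pat p" unfolding X0_mem by auto
  moreover have "{1..m} = {1..<1+m}" by auto
  ultimately show "p \<in> Av 1 m" unfolding Av_def by simp
qed

lemma finite_X0: "finite (X0 k m)"
  using finite_subset[OF X0_sub finite_Av] .

lemma X0_len: "p \<in> X0 k m \<Longrightarrow> length p = m"
proof -
  assume "p \<in> X0 k m"
  hence "distinct p" "set p = {1..m}" unfolding X0_mem by auto
  thus ?thesis by (metis distinct_card card_atLeastAtMost diff_Suc_1)
qed

lemma X0_0: "k \<ge> 1 \<Longrightarrow> X0 k 0 = {}"
  unfolding X0_def by auto

lemma X0_1: "X0 1 m = (if m = 1 then {[1]} else {})"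
proof (cases "m = 1")
  case True
  have "p \<in> X0 1 1 \<longleftrightarrow> p = [1]" for p
  proof
    assume "p \<in> X0 1 1"
    hence "length p = 1" by (rule X0_len)
    moreover have "p!0 = 1" using \<open>p \<in> X0 1 1\<close> unfolding X0_mem by simp
    ultimately
    show "p = [1]" by (cases p) auto
  next
    assume "p = [1]"
    thus "p \<in> X0 1 1" unfolding X0_mem pat_def by auto
  qed
  thus ?thesis using True by auto
next
  case False
  have "p \<notin> X0 1 m" for p using False unfolding X0_mem by auto
  thus ?thesis using False by auto
qed

lemma X0_rec:
  assumes k: "k \<ge> 2"
  shows "X0 k m = (\<Union>g\<in>{..<m}. (\<lambda>(q,s). m # q @ s) ` (X0 (k-1) g \<times> Av (g+1) (m-1-g)))"
proof
  show "(\<Union>g\<in>{..<m}. (\<lambda>(q,s). m # q @ s) ` (X0 (k-1) g \<times> Av (g+1) (m-1-g))) \<subseteq> X0 k m"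
  proof (rule UN_least, rule image_subsetI)
    fix g qs assume g: "g \<in> {..<m}" and qs: "qs \<in> X0 (k-1) g \<times> Av (g+1) (m-1-g)"
    obtain q s where qsd: "qs = (q,s)" and q: "q \<in> X0 (k-1) g" and s: "s \<in> Av (g+1) (m-1-g)"
      using qs by blast
    have gm: "g < m" using g by simp
    have sq: "set q = {1..g}" and dq: "distinct q" and npq: "\<not> pat q" and kg: "k - 1 \<le> g"
      and q1: "q!(k-2) = 1" using q k unfolding X0_mem by (auto simp: numeral_2_eq_2)
    have lq: "length q = g" using X0_len[OF q] .
    have "set s = {g+1..<g+1+(m-1-g)}" using s unfolding Av_def by blast
    moreover have "g+1+(m-1-g) = m" using gm by simp
    ultimately have ss: "set s = {g+1..<m}" by simp
    have ds: "distinct s" and nps: "\<not> pat s" using s unfolding Av_def by auto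
    have d: "distinct (m # q @ s)" using dq ds sq ss gm by auto
    have st: "set (m # q @ s) = {1..m}" using sq ss gm by auto
    have np: "\<not> pat (m # q @ s)"
    proof
      assume "pat (m # q @ s)"
      moreover have "\<forall>v\<in>set (q@s). v < m" using sq ss gm by auto
      ultimately have "pat (q @ s)" using pat_head by blast
      moreover have "\<forall>u\<in>set q. \<forall>v\<in>set s. u<v" using sq ss by auto
      ultimately have "pat q \<or> pat s" using pat_split by blast
      thus False using npq nps by simp
    qed
    have km: "k \<le> m" using kg gm k by simp
    have k1: "k - 1 = Suc (k-2)" using k by simp
    have "(m # q @ s) ! (k-1) = (q @ s) ! (k-2)" by (simp only: k1 nth_Cons_Suc)
    also have "\<dots> = 1"
    proof -
      have "k-2 < length q" using kg k lq by arith
      thus ?thesis using q1 by (simp add: nth_append)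
    qed
    finally have "(m # q @ s) ! (k-1) = 1" .
    thus "(\<lambda>(q,s). m # q @ s) qs \<in> X0 k m" using d st np km qsd unfolding X0_mem by simp
  qed
next
  show "X0 k m \<subseteq> (\<Union>g\<in>{..<m}. (\<lambda>(q,s). m # q @ s) ` (X0 (k-1) g \<times> Av (g+1) (m-1-g)))"
  proof
    fix p assume p: "p \<in> X0 k m"
    have dp: "distinct p" and sp: "set p = {1..m}" and np: "\<not> pat p" and km: "k \<le> m"
      and p0: "p!0 = m" and pk: "p!(k-1) = 1" using p unfolding X0_mem by auto
    have lp: "length p = m" using X0_len[OF p] .
    obtain b where pb: "p = m # b" using lp p0 k km by (cases p) auto
    have db: "distinct b" and mb: "m \<notin> set b" using dp pb by auto
    have "set b = set p - {m}" using pb mb by auto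
    also have "\<dots> = {1..<m}" using sp by auto
    finally have sb: "set b = {1..<m}" .
    have lb: "length b = m - 1" using lp pb by simp
    have npb: "\<not> pat b" using np pb pat_Cons by blast
    define g where "g = b!0"
    have b0: "b \<noteq> []" using lb k km by auto
    have gb: "g \<in> set b" using b0 unfolding g_def by simp
    hence g1: "1 \<le> g" and gm: "g < m" using sb by auto
    define x where "x = takeWhile (\<lambda>u. u \<le> g) b"
    define y where "y = dropWhile (\<lambda>u. u \<le> g) b"
    have bxy: "b = x @ y" unfolding x_def y_def by simp
    obtain b' where bb': "b = g # b'" using b0 unfolding g_def by (cases b) auto
    have xg: "x = g # takeWhile (\<lambda>u. u \<le> g) b'" unfolding x_def bb' by simp
    have sx: "set x \<subseteq> {..g}" unfolding x_def by (auto dest: set_takeWhileD)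
    have sy: "\<forall>v\<in>set y. g < v"
    proof (rule ccontr)
      assume "\<not> ?thesis"
      then obtain v where v: "v \<in> set y" "v \<le> g" by auto
      obtain t where t: "t < length y" "y!t = v" using v(1) by (meson in_set_conv_nth)
      have yne: "y \<noteq> []" using v by auto
      have lxb: "length x < length b" using bxy yne by simp
      have "\<not> (\<lambda>u. u \<le> g) (b ! length (takeWhile (\<lambda>u. u \<le> g) b))"
        by (rule nth_length_takeWhile) (use lxb in \<open>simp add: x_def\<close>)
      hence y0: "\<not> (b ! length x \<le> g)" unfolding x_def by simp
      have by0: "b ! length x = y!0" using bxy by (simp add: nth_append)
      have t0: "t \<noteq> 0"
      proof
        assume "t = 0"
        hence "y!0 \<le> g" using t v by simp
        thus False using y0 by0 by simp
      qed
      have bv: "b ! (length x + t) = v" using bxy t by (simp add: nth_append)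
      have lx1: "length x \<ge> 1" using xg by simp
      have "v \<noteq> g"
      proof
        assume "v = g"
        hence "b ! (length x + t) = b ! 0" using bv g_def by simp
        moreover have "length x + t < length b" using bxy t by simp
        ultimately show False using db nth_eq_iff_index_eq lx1 by fastforce
      qed
      hence "v < g" using v by simp
      have xne: "x \<noteq> []" using xg by simp
      have ltb: "length x + t < length b" using bxy t by simp
      have "pat b" unfolding pat_def
        apply (rule exI[of _ 0], rule exI[of _ "length x"], rule exI[of _ "length x + t"])
        using lx1 xne t0 y0 bv \<open>v < g\<close> ltb by (simp add: g_def)
      thus False using npb by simp
    qed
    have dxy: "distinct x" "distinct y" "set x \<inter> set y = {}" using db bxy by auto
    have sx': "set x = {1..g}"
    proof
      have "set x \<subseteq> set b" using bxy by auto
      thus "set x \<subseteq> {1..g}" using sx sb by (force simp: subset_iff)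
      show "{1..g} \<subseteq> set x"
      proof
        fix w assume w: "w \<in> {1..g}"
        hence "w \<in> set b" using sb gm by auto
        thus "w \<in> set x" using sy w bxy by auto
      qed
    qed
    have "set y = set b - set x" using bxy dxy by auto
    also have "\<dots> = {g+1..<m}" unfolding sb sx' by auto
    finally have sy': "set y = {g+1..<m}" .
    have lx: "length x = g" using sx' dxy distinct_card[of x] by simp
    have k1: "k - 1 = Suc (k-2)" using k by simp
    have bk: "b!(k-2) = 1" using pk unfolding pb k1 by simp
    have kx: "k - 2 < length x"
    proof (rule ccontr)
      assume "\<not> ?thesis"
      moreover have "k - 2 < length b" using lb km k by simp
      ultimately have "b!(k-2) \<in> set y" using bxy by (simp add: nth_append)
      hence "g < b!(k-2)" using sy by blast
      thus False using bk g1 by simp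
    qed
    have x1: "x!(k-2) = 1" using bk kx bxy by (simp add: nth_append)
    have xk: "x!((k-1)-1) = 1" using x1 by (simp add: numeral_2_eq_2)
    have npx: "\<not> pat x" using npb bxy pat_append1 by blast
    have npy: "\<not> pat y" using npb bxy pat_append2 by blast
    have kg: "k-1 \<le> g" using kx lx k by arith
    have x0: "x!0 = g" using xg by simp
    have xX: "x \<in> X0 (k-1) g" unfolding X0_mem
      using dxy(1) sx' npx kg x0 xk by blast
    have "g + 1 + (m - 1 - g) = m" using gm by simp
    hence yA: "y \<in> Av (g+1) (m-1-g)" unfolding Av_def using dxy sy' npy by simp
    have "p = (\<lambda>(q,s). m # q @ s) (x,y)" using pb bxy by simp
    moreover have "(x,y) \<in> X0 (k-1) g \<times> Av (g+1) (m-1-g)" using xX yA by simp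
    ultimately have "p \<in> (\<lambda>(q,s). m # q @ s) ` (X0 (k-1) g \<times> Av (g+1) (m-1-g))" by (rule image_eqI)
    moreover have "g \<in> {..<m}" using gm by simp
    ultimately show "p \<in> (\<Union>g\<in>{..<m}. (\<lambda>(q,s). m # q @ s) ` (X0 (k-1) g \<times> Av (g+1) (m-1-g)))"
      by (rule UN_I[rotated])
  qed
qed

lemma X0_hd: "q \<in> X0 k g \<Longrightarrow> k \<ge> 1 \<Longrightarrow> q \<noteq> [] \<and> q ! 0 = g"
proof -
  assume q: "q \<in> X0 k g" and k: "k \<ge> 1"
  have "length q = g" using X0_len[OF q] .
  moreover have "k \<le> g" "q!0 = g" using q unfolding X0_mem by auto
  ultimately show ?thesis using k by auto
qed

lemma card_X0_rec:
  assumes k: "k \<ge> 2"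
  shows "card (X0 k m) = (\<Sum>g<m. card (X0 (k-1) g) * catalan (m-1-g))"
proof -
  define f :: "nat list \<times> nat list \<Rightarrow> nat list" where "f = (\<lambda>(q,s). m # q @ s)"
  have k1: "k - 1 \<ge> 1" using k by simp
  have inj: "inj_on f (X0 (k-1) g \<times> Av (g+1) (m-1-g))" for g
  proof (rule inj_onI)
    fix u v assume u: "u \<in> X0 (k-1) g \<times> Av (g+1) (m-1-g)" and v: "v \<in> X0 (k-1) g \<times> Av (g+1) (m-1-g)"
      and e: "f u = f v"
    obtain x y where uxy: "u = (x,y)" and x: "x \<in> X0 (k-1) g" using u by blast
    obtain x' y' where vxy: "v = (x',y')" and x': "x' \<in> X0 (k-1) g" using v by blast
    have "x @ y = x' @ y'" using e uxy vxy unfolding f_def by simp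
    moreover have "length x = length x'" using X0_len[OF x] X0_len[OF x'] by simp
    ultimately show "u = v" using uxy vxy by simp
  qed
  have "card (X0 k m) = (\<Sum>g<m. card (f ` (X0 (k-1) g \<times> Av (g+1) (m-1-g))))"
    unfolding X0_rec[OF k] f_def[symmetric]
  proof (rule card_UN_disjoint)
    show "finite {..<m}" by simp
    show "\<forall>g\<in>{..<m}. finite (f ` (X0 (k-1) g \<times> Av (g+1) (m-1-g)))"
      using finite_Av finite_X0 by auto
    show "\<forall>i\<in>{..<m}. \<forall>j\<in>{..<m}. i \<noteq> j \<longrightarrow> f ` (X0 (k-1) i \<times> Av (i+1) (m-1-i)) \<inter>
        f ` (X0 (k-1) j \<times> Av (j+1) (m-1-j)) = {}"
    proof (intro ballI impI)
      fix i j :: nat assume ij: "i \<noteq> j"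
      show "f ` (X0 (k-1) i \<times> Av (i+1) (m-1-i)) \<inter> f ` (X0 (k-1) j \<times> Av (j+1) (m-1-j)) = {}"
      proof (rule ccontr)
        assume "\<not> ?thesis"
        then obtain x y x' y' where x: "x \<in> X0 (k-1) i" and x': "x' \<in> X0 (k-1) j"
          and e: "m # x @ y = m # x' @ y'" unfolding f_def by auto
        have "(x @ y) ! 0 = i" using X0_hd[OF x k1] by (simp add: nth_append)
        moreover have "(x' @ y') ! 0 = j" using X0_hd[OF x' k1] by (simp add: nth_append)
        ultimately show False using e ij by simp
      qed
    qed
  qed
  also have "\<dots> = (\<Sum>g<m. card (X0 (k-1) g) * catalan (m-1-g))"
    by (rule sum.cong) (simp_all only: card_image[OF inj] card_cartesian_product card_Av)
  finally show ?thesis .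
qed



lemma F_eq: "k \<ge> 1 \<Longrightarrow> Abs_fps (\<lambda>m. if m \<ge> 1 then int (card (X0 k m)) else 0) = fps_X ^ k * catalan_fps ^ (k - 1)"
proof (induction k rule: nat_induct_at_least)
  case base
  show ?case
  proof (rule fps_ext)
    fix m :: nat
    show "Abs_fps (\<lambda>m. if m \<ge> 1 then int (card (X0 1 m)) else 0) $ m = (fps_X ^ 1 * catalan_fps ^ (1-1)) $ m"
      unfolding X0_1 by (simp add: fps_X_nth)
  qed
next
  case (Suc k)
  define F where "F = Abs_fps (\<lambda>m. if m \<ge> 1 then int (card (X0 k m)) else 0)"
  have F0: "F $ i = int (card (X0 k i))" for i
    using X0_0[OF Suc.hyps] unfolding F_def by (cases i) auto
  have rec: "Abs_fps (\<lambda>m. if m \<ge> 1 then int (card (X0 (Suc k) m)) else 0) = fps_X * (F * catalan_fps)"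
  proof (rule fps_ext)
    fix m :: nat
    show "Abs_fps (\<lambda>m. if m \<ge> 1 then int (card (X0 (Suc k) m)) else 0) $ m = (fps_X * (F * catalan_fps)) $ m"
    proof (cases m)
      case 0 then show ?thesis by simp
    next
      case (Suc m')
      have k2: "Suc k \<ge> 2" using Suc.hyps by simp
      have "card (X0 (Suc k) m) = (\<Sum>g<m. card (X0 (Suc k - 1) g) * catalan (m-1-g))"
        by (rule card_X0_rec[OF k2])
      also have "\<dots> = (\<Sum>g=0..m'. card (X0 k g) * catalan (m'-g))"
        using Suc by (simp add: atLeast0AtMost lessThan_Suc_atMost)
      finally have c: "int (card (X0 (Suc k) m)) = (\<Sum>g=0..m'. int (card (X0 k g)) * int (catalan (m'-g)))"
        by simp
      have "(fps_X * (F * catalan_fps)) $ m = (F * catalan_fps) $ m'" using Suc by simp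
      also have "\<dots> = (\<Sum>g=0..m'. F $ g * catalan_fps $ (m'-g))" by (rule fps_mult_nth)
      also have "\<dots> = (\<Sum>g=0..m'. int (card (X0 k g)) * int (catalan (m'-g)))"
        by (simp add: F0 catalan_fps_def)
      finally show ?thesis using c Suc by simp
    qed
  qed
  obtain j where j: "k = Suc j" using Suc.hyps by (cases k) auto
  have "fps_X * (F * catalan_fps) = fps_X ^ Suc k * catalan_fps ^ (Suc k - 1)"
  proof -
    have IH: "F = fps_X ^ k * catalan_fps ^ (k - 1)" using Suc.IH unfolding F_def .
    show ?thesis unfolding IH j by (simp add: algebra_simps)
  qed
  thus ?case using rec by simp
qed

theorem lemma1:
  fixes k :: nat
  assumes "k \<ge> 1"
  shows "Abs_fps (\<lambda>m. if m \<ge> 1 then int (card (X0 k m)) else 0)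
           = fps_X ^ k * catalan_fps ^ (k - 1)"
  using F_eq[OF assms] .


end
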